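(* Let $F$ be the $2$-dimensional cellular automaton with state set $Q_F=\{0,\leftarrow,\downarrow,\leftarrow\!\!\!\!\downarrow\}$, neighborhood $\{(0,0),(0,1),(1,0)\}$, and local rule $f(\text{center},\text{north},\text{east})$ given by $f(0,\downarrow,0)=\downarrow$, $f(0,0,\leftarrow)=\leftarrow$, $f(0,\ast,\leftarrow\!\!\!\!\downarrow)=\leftarrow$, $f(\downarrow,\ast,\leftarrow)=\leftarrow\!\!\!\!\downarrow$, and $f(a,\ast,\ast)=a$ in all other cases (where $\ast$ denotes any state, north is the cell at offset $(0,1)$ and east the cell at offset $(1,0)$). Then no $2$-dimensional freezing cellular automaton with neighborhood $\mathrm{VN}_2$ which is $1$-change can simulate $F$. Consequently, there is no $1$-change freezing cellular automaton with neighborhood $\mathrm{VN}_2$ which simulates every $2$-dimensional freezing cellular automaton with neighborhood $\mathrm{VN}_2$.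
   Context: A $d$-dimensional cellular automaton (CA) is $F=(d,Q,N,f)$ with $Q$ finite, $N\subset\mathbb{Z}^d$ finite, $f:Q^N\to Q$, global map $F(c)_z=f(c|_{z+N})$. A CA is freezing if there is a partial order $\preceq$ on $Q$ with $F(c)_z\preceq c_z$ for all $c,z$. A CA is $k$-change if in every orbit every cell changes state at most $k$ times. $\mathrm{VN}_2=\{(0,0),(\pm1,0),(0,\pm1)\}$. Simulation: $U$ simulates $G$ (same dimension $d$) if there exist $T>0$, a rectangular block $B\subseteq\mathbb{Z}^d$ with size-vector $b$, a finite $C\subset\mathbb{Z}^d$ with $\vec0\in C$, and $\phi:Q_G^C\to Q_U^B$ such that $\bar\phi(c)_{bz+r}=\phi(c|_{z+C})_r$ ($bz$ componentwise) defines an injective map $\bar\phi$ with $\bar\phi(G(c))=U^T(\bar\phi(c))$ for all $c$. *)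

theory Defs
  imports Main
begin

text \<open>The local rule is
applied to the pattern c restricted to z + N (values outside N are left undefined).\<close>

type_synonym cell = "int \<times> int"

definition addp :: "cell \<Rightarrow> cell \<Rightarrow> cell" where
  "addp z n = (fst z + fst n, snd z + snd n)"

definition conf :: "'q set \<Rightarrow> (cell \<Rightarrow> 'q) set" where
  "conf Q = {c. \<forall>z. c z \<in> Q}"

definition pat :: "cell set \<Rightarrow> (cell \<Rightarrow> 'q) \<Rightarrow> cell \<Rightarrow> (cell \<Rightarrow> 'q)" where
  "pat N c z = (\<lambda>n. if n \<in> N then c (addp z n) else undefined)"

definition glob :: "cell set \<Rightarrow> ((cell \<Rightarrow> 'q) \<Rightarrow> 'q) \<Rightarrow> (cell \<Rightarrow> 'q) \<Rightarrow> (cell \<Rightarrow> 'q)" where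
  "glob N f c = (\<lambda>z. f (pat N c z))"

definition is_CA :: "'q set \<Rightarrow> cell set \<Rightarrow> ((cell \<Rightarrow> 'q) \<Rightarrow> 'q) \<Rightarrow> bool" where
  "is_CA Q N f \<longleftrightarrow> finite Q \<and> Q \<noteq> {} \<and> finite N \<and>
     (\<forall>p. (\<forall>n\<in>N. p n \<in> Q) \<longrightarrow> f p \<in> Q)"

definition freezing :: "'q set \<Rightarrow> cell set \<Rightarrow> ((cell \<Rightarrow> 'q) \<Rightarrow> 'q) \<Rightarrow> bool" where
  "freezing Q N f \<longleftrightarrow> (\<exists>R. partial_order_on Q R \<and>
     (\<forall>c\<in>conf Q. \<forall>z. (glob N f c z, c z) \<in> R))"

definition k_change :: "nat \<Rightarrow> 'q set \<Rightarrow> cell set \<Rightarrow> ((cell \<Rightarrow> 'q) \<Rightarrow> 'q) \<Rightarrow> bool" where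
  "k_change k Q N f \<longleftrightarrow> (\<forall>c\<in>conf Q. \<forall>z.
     finite {t::nat. (glob N f ^^ Suc t) c z \<noteq> (glob N f ^^ t) c z} \<and>
     card {t::nat. (glob N f ^^ Suc t) c z \<noteq> (glob N f ^^ t) c z} \<le> k)"

text \<open>Block encoding: the block B = [a1, a1+b1) x [a2, a2+b2) with size vector b = (b1,b2).
Cell w is written uniquely as w = b z + r with r in B; its image is phi (c|_{z+C}) r.\<close>

definition block :: "int \<Rightarrow> int \<Rightarrow> int \<Rightarrow> int \<Rightarrow> cell set" where
  "block a1 a2 b1 b2 = {a1..<a1+b1} \<times> {a2..<a2+b2}"

definition phibar :: "int \<Rightarrow> int \<Rightarrow> int \<Rightarrow> int \<Rightarrow> cell set \<Rightarrow>
    ((cell \<Rightarrow> 'g) \<Rightarrow> cell \<Rightarrow> 'q) \<Rightarrow> (cell \<Rightarrow> 'g) \<Rightarrow> (cell \<Rightarrow> 'q)" where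
  "phibar a1 a2 b1 b2 C \<phi> c = (\<lambda>w.
     let z = ((fst w - a1) div b1, (snd w - a2) div b2)
     in \<phi> (pat C c z) (fst w - b1 * fst z, snd w - b2 * snd z))"

definition simulates ::
  "'q set \<Rightarrow> cell set \<Rightarrow> ((cell \<Rightarrow> 'q) \<Rightarrow> 'q) \<Rightarrow>
   'g set \<Rightarrow> cell set \<Rightarrow> ((cell \<Rightarrow> 'g) \<Rightarrow> 'g) \<Rightarrow> bool" where
  "simulates QU NU fU QG NG fG \<longleftrightarrow>
    (\<exists>(T::nat) a1 a2 b1 b2 C \<phi>. T > 0 \<and> b1 > 0 \<and> b2 > 0 \<and>
       finite C \<and> (0,0) \<in> C \<and>
       (\<forall>p. (\<forall>n\<in>C. p n \<in> QG) \<longrightarrow> (\<forall>r\<in>block a1 a2 b1 b2. \<phi> p r \<in> QU)) \<and>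
       inj_on (phibar a1 a2 b1 b2 C \<phi>) (conf QG) \<and>
       (\<forall>c\<in>conf QG. phibar a1 a2 b1 b2 C \<phi> (glob NG fG c) =
                       (glob NU fU ^^ T) (phibar a1 a2 b1 b2 C \<phi> c)))"

definition VN2 :: "cell set" where
  "VN2 = {(0,0), (1,0), (-1,0), (0,1), (0,-1)}"

datatype fstate = Zero | Left | Down | LeftDown

definition NF :: "cell set" where
  "NF = {(0,0), (0,1), (1,0)}"

definition fF_loc :: "fstate \<Rightarrow> fstate \<Rightarrow> fstate \<Rightarrow> fstate" where
  "fF_loc a n e =
    (if a = Zero \<and> n = Down \<and> e = Zero then Down
     else if a = Zero \<and> n = Zero \<and> e = Left then Left
     else if a = Zero \<and> e = LeftDown then Left
     else if a = Down \<and> e = Left then LeftDown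
     else a)"

definition fF :: "(cell \<Rightarrow> fstate) \<Rightarrow> fstate" where
  "fF p = fF_loc (p (0,0)) (p (0,1)) (p (1,0))"

end

theory Submission
  imports Defs
begin


definition adj :: "cell \<Rightarrow> cell \<Rightarrow> bool" where
  "adj u v \<longleftrightarrow> \<bar>fst u - fst v\<bar> + \<bar>snd u - snd v\<bar> \<le> 1"

lemma parity_changes:
  fixes s :: "nat \<Rightarrow> bool"
  shows "even (card {i. i < n \<and> s i \<noteq> s (Suc i)}) \<longleftrightarrow> (s 0 = s n)"
proof (induction n)
  case 0 show ?case by simp
next
  case (Suc n)
  have fin: "finite {i. i < n \<and> s i \<noteq> s (Suc i)}" by simp
  show ?case
  proof (cases "s n = s (Suc n)")
    case True
    have "{i. i < Suc n \<and> s i \<noteq> s (Suc i)} = {i. i < n \<and> s i \<noteq> s (Suc i)}"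
      using True by (auto simp: less_Suc_eq)
    then show ?thesis using Suc.IH True by simp
  next
    case False
    have "{i. i < Suc n \<and> s i \<noteq> s (Suc i)} = insert n {i. i < n \<and> s i \<noteq> s (Suc i)}"
      using False by (auto simp: less_Suc_eq)
    moreover have "n \<notin> {i. i < n \<and> s i \<noteq> s (Suc i)}" by simp
    ultimately have "card {i. i < Suc n \<and> s i \<noteq> s (Suc i)} = Suc (card {i. i < n \<and> s i \<noteq> s (Suc i)})"
      using fin by simp
    moreover have "(s 0 = s (Suc n)) \<longleftrightarrow> \<not> (s 0 = s n)" using False by (cases "s 0"; cases "s n"; cases "s (Suc n)") auto
    ultimately show ?thesis using Suc.IH by simp
  qed
qed

definition vst :: "cell \<Rightarrow> cell \<Rightarrow> cell \<Rightarrow> bool" where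
  "vst w a b \<longleftrightarrow> fst a = fst b \<and> fst a \<ge> fst w \<and>
     ((snd a = snd w \<and> snd b = snd w + 1) \<or> (snd b = snd w \<and> snd a = snd w + 1))"

definition cr :: "(nat \<Rightarrow> cell) \<Rightarrow> nat \<Rightarrow> cell \<Rightarrow> nat" where
  "cr p n w = card {i. i < n \<and> vst w (p i) (p (Suc i))}"

lemma adj_cases0:
  fixes a1 a2 b1 b2 :: int
  assumes "adj (a1,a2) (b1,b2)"
  shows "(b1 = a1 \<and> b2 = a2) \<or> (b1 = a1 + 1 \<and> b2 = a2) \<or> (a1 = b1 + 1 \<and> a2 = b2) \<or> (b1 = a1 \<and> b2 = a2 + 1) \<or> (a1 = b1 \<and> a2 = b2 + 1)"
proof -
  have h: "\<bar>a1 - b1\<bar> + \<bar>a2 - b2\<bar> \<le> 1" using assms by (simp add: adj_def)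
  have "a1 - b1 \<in> {-1,0,1}" "a2 - b2 \<in> {-1,0,1}" "a1 = b1 \<or> a2 = b2" using h by auto
  then show ?thesis by auto
qed

lemma adj_cases:
  assumes "adj u v"
  shows "v = u \<or> v = (fst u + 1, snd u) \<or> u = (fst v + 1, snd v) \<or> v = (fst u, snd u + 1) \<or> u = (fst v, snd v + 1)"
  using adj_cases0[of "fst u" "snd u" "fst v" "snd v"] assms by (cases u, cases v) auto

lemma step_v0:
  fixes a1 a2 b1 b2 :: int
  assumes "(b1 = a1 \<and> b2 = a2) \<or> (b1 = a1 + 1 \<and> b2 = a2) \<or> (a1 = b1 + 1 \<and> a2 = b2) \<or> (b1 = a1 \<and> b2 = a2 + 1) \<or> (a1 = b1 \<and> a2 = b2 + 1)"
   "(a2 = y+1 \<and> a1 \<ge> x) \<noteq> (b2 = y+1 \<and> b1 \<ge> x)"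
  shows "vst (x,y) (a1,a2) (b1,b2) \<or> vst (x,y+1) (a1,a2) (b1,b2) \<or> (a1,a2) = (x,y+1) \<or> (b1,b2) = (x,y+1)"
  using assms(1) apply (elim disjE conjE)
  using assms(2) by (simp_all add: vst_def) (auto simp: not_le)

lemma step_v:
  assumes "adj a b" "(snd a = y+1 \<and> fst a \<ge> x) \<noteq> (snd b = y+1 \<and> fst b \<ge> x)"
  shows "vst (x,y) a b \<or> vst (x,y+1) a b \<or> a = (x,y+1) \<or> b = (x,y+1)"
proof -
  obtain a1 a2 b1 b2 where a: "a = (a1,a2)" and b: "b = (b1,b2)" by (cases a, cases b)
  show ?thesis using step_v0[OF adj_cases0, of a1 a2 b1 b2 y x] assms unfolding a b by simp
qed

lemma step_w0:
  fixes a1 a2 b1 b2 :: int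
  assumes "(b1 = a1 \<and> b2 = a2) \<or> (b1 = a1 + 1 \<and> b2 = a2) \<or> (a1 = b1 + 1 \<and> a2 = b2) \<or> (b1 = a1 \<and> b2 = a2 + 1) \<or> (a1 = b1 \<and> a2 = b2 + 1)"
   "a1 > x" "b1 > x"
  shows "(a2 > y) \<noteq> (b2 > y) \<longleftrightarrow> vst (x,y) (a1,a2) (b1,b2)"
  using assms(1) apply (elim disjE conjE)
  using assms(2,3) by (simp_all add: vst_def) (auto simp: not_le)

lemma step_w:
  assumes "adj a b" "fst a > x" "fst b > x"
  shows "(snd a > y) \<noteq> (snd b > y) \<longleftrightarrow> vst (x,y) a b"
proof -
  obtain a1 a2 b1 b2 where a: "a = (a1,a2)" and b: "b = (b1,b2)" by (cases a, cases b)
  show ?thesis using step_w0[OF adj_cases0, of a1 a2 b1 b2 x y] assms unfolding a b by simp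
qed

lemma step_v2:
  assumes "vst (x,y) a b \<or> vst (x,y+1) a b"
  shows "(snd a = y+1 \<and> fst a \<ge> x) \<noteq> (snd b = y+1 \<and> fst b \<ge> x)"
  using assms by (cases a, cases b) (auto simp: vst_def)

lemma step_disj: "\<not> (vst w a b \<and> vst (fst w,snd w+1) a b)"
  by (cases a, cases b) (auto simp: vst_def)

lemma crossing:
  assumes pa: "\<forall>i<n. adj (p i) (p (Suc i))" and qa: "\<forall>j<m. adj (q j) (q (Suc j))"
    and p0: "snd (p 0) \<le> S" and pn: "snd (p n) \<ge> N" and pX: "\<forall>i\<le>n. \<bar>fst (p i)\<bar> \<le> X"
    and q0: "fst (q 0) < -X" and qm: "fst (q m) > X"
    and qY: "\<forall>j\<le>m. S < snd (q j) \<and> snd (q j) < N"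
  shows "\<exists>i\<le>n. \<exists>j\<le>m. p i = q j"
proof (rule ccontr)
  assume nx: "\<not> ?thesis"
  define onP where "onP w \<longleftrightarrow> (\<exists>i\<le>n. p i = w)" for w
  have qnot: "\<not> onP (q j)" if "j \<le> m" for j using nx that onP_def by blast
  have key_h: "cr p n w = cr p n (fst w + 1, snd w)" if "\<not> onP w" for w
  proof -
    have "{i. i < n \<and> vst w (p i) (p (Suc i))} = {i. i < n \<and> vst (fst w + 1, snd w) (p i) (p (Suc i))}"
    proof (intro Collect_cong conj_cong refl iffI)
      fix i assume i: "i < n" and v: "vst w (p i) (p (Suc i))"
      have "fst (p i) \<noteq> fst w"
      proof
        assume e: "fst (p i) = fst w"
        then have "p i = w \<or> p (Suc i) = w" using v unfolding vst_def
          by (cases "p i", cases "p (Suc i)", cases w) auto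
        then show False using that i unfolding onP_def by (metis Suc_leI less_imp_le_nat)
      qed
      then show "vst (fst w + 1, snd w) (p i) (p (Suc i))" using v unfolding vst_def by auto
    next
      fix i assume "vst (fst w + 1, snd w) (p i) (p (Suc i))"
      then show "vst w (p i) (p (Suc i))" unfolding vst_def by auto
    qed
    then show ?thesis unfolding cr_def by simp
  qed
  have key_v: "even (cr p n w + cr p n (fst w, snd w + 1))"
    if nw: "\<not> onP (fst w, snd w + 1)" and sw: "S < snd w" "snd w + 1 < N" for w
  proof -
    define s where "s i = (snd (p i) = snd w + 1 \<and> fst (p i) \<ge> fst w)" for i
    have "s 0 = s n" using p0 pn sw unfolding s_def by auto
    then have ev: "even (card {i. i < n \<and> s i \<noteq> s (Suc i)})" using parity_changes[of n s] by simp
    have eq: "{i. i < n \<and> s i \<noteq> s (Suc i)} =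
      {i. i < n \<and> vst w (p i) (p (Suc i))} \<union> {i. i < n \<and> vst (fst w, snd w + 1) (p i) (p (Suc i))}"
    proof (intro set_eqI iffI)
      fix i assume "i \<in> {i. i < n \<and> s i \<noteq> s (Suc i)}"
      then have i: "i < n" and d: "s i \<noteq> s (Suc i)" by auto
      have "vst (fst w, snd w) (p i) (p (Suc i)) \<or> vst (fst w, snd w + 1) (p i) (p (Suc i))
            \<or> p i = (fst w, snd w + 1) \<or> p (Suc i) = (fst w, snd w + 1)"
        by (rule step_v) (use pa i d s_def in auto)
      moreover have "p i \<noteq> (fst w, snd w + 1)" "p (Suc i) \<noteq> (fst w, snd w + 1)"
        using nw i unfolding onP_def by (auto intro: less_imp_le_nat Suc_leI)
      ultimately show "i \<in> {i. i < n \<and> vst w (p i) (p (Suc i))} \<union> {i. i < n \<and> vst (fst w, snd w + 1) (p i) (p (Suc i))}"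
        using i by auto
    next
      fix i assume "i \<in> {i. i < n \<and> vst w (p i) (p (Suc i))} \<union> {i. i < n \<and> vst (fst w, snd w + 1) (p i) (p (Suc i))}"
      then have i: "i < n" and v: "vst (fst w, snd w) (p i) (p (Suc i)) \<or> vst (fst w, snd w + 1) (p i) (p (Suc i))" by auto
      from step_v2[OF v] show "i \<in> {i. i < n \<and> s i \<noteq> s (Suc i)}" using i s_def by auto
    qed
    have dj: "{i. i < n \<and> vst w (p i) (p (Suc i))} \<inter> {i. i < n \<and> vst (fst w, snd w + 1) (p i) (p (Suc i))} = {}"
      using step_disj[of w] by blast
    have "card {i. i < n \<and> s i \<noteq> s (Suc i)} = cr p n w + cr p n (fst w, snd w + 1)"
      unfolding eq cr_def by (subst card_Un_disjoint) (use dj in auto)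
    then show ?thesis using ev by simp
  qed
  have west: "odd (cr p n w)" if "fst w < -X" "S < snd w" "snd w < N" for w
  proof -
    define s where "s i = (snd (p i) > snd w)" for i
    have "s 0 \<noteq> s n" using p0 pn that unfolding s_def by auto
    then have od: "odd (card {i. i < n \<and> s i \<noteq> s (Suc i)})" using parity_changes[of n s] by simp
    have "{i. i < n \<and> s i \<noteq> s (Suc i)} = {i. i < n \<and> vst w (p i) (p (Suc i))}"
    proof (intro Collect_cong conj_cong refl)
      fix i assume i: "i < n"
      have "\<bar>fst (p i)\<bar> \<le> X" "\<bar>fst (p (Suc i))\<bar> \<le> X" using pX i by auto
      then have "fst (p i) > fst w" "fst (p (Suc i)) > fst w" using that by (auto simp: abs_le_iff)
      then show "(s i \<noteq> s (Suc i)) = vst w (p i) (p (Suc i))"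
        using step_w[of "p i" "p (Suc i)" "fst w" "snd w"] pa i unfolding s_def by auto
    qed
    then show ?thesis using od unfolding cr_def by simp
  qed
  have east: "cr p n w = 0" if "fst w > X" for w
  proof -
    have "{i. i < n \<and> vst w (p i) (p (Suc i))} = {}"
    proof (intro equalityI subsetI)
      fix i assume "i \<in> {i. i < n \<and> vst w (p i) (p (Suc i))}"
      then have "i < n" "fst (p i) \<ge> fst w" unfolding vst_def by auto
      moreover have "\<bar>fst (p i)\<bar> \<le> X" using pX \<open>i < n\<close> by auto
      ultimately show "i \<in> {}" using that by (auto simp: abs_le_iff)
    qed simp
    then show ?thesis unfolding cr_def by simp
  qed
  have "\<forall>j\<le>m. odd (cr p n (q j))"
  proof (intro allI impI)
    fix j assume "j \<le> m"
    then show "odd (cr p n (q j))"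
    proof (induction j)
      case 0 then show ?case using west q0 qY by auto
    next
      case (Suc j)
      then have IH: "odd (cr p n (q j))" and jm: "j < m" by auto
      have a: "adj (q j) (q (Suc j))" using qa jm by auto
      have n1: "\<not> onP (q j)" "\<not> onP (q (Suc j))" using qnot jm Suc.prems by auto
      have y1: "S < snd (q j)" "snd (q j) < N" "S < snd (q (Suc j))" "snd (q (Suc j)) < N"
        using qY jm Suc.prems by auto
      consider "q (Suc j) = q j" | "q (Suc j) = (fst (q j) + 1, snd (q j))"
        | "q j = (fst (q (Suc j)) + 1, snd (q (Suc j)))"
        | "q (Suc j) = (fst (q j), snd (q j) + 1)" | "q j = (fst (q (Suc j)), snd (q (Suc j)) + 1)"
        using adj_cases[OF a] by blast
      then show ?case
      proof cases
        case 1 then show ?thesis using IH by simp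
      next
        case 2 then show ?thesis using IH key_h[OF n1(1)] by simp
      next
        case 3 then show ?thesis using IH key_h[OF n1(2)] by simp
      next
        case 4 then show ?thesis using IH key_v[of "q j"] n1 y1 by auto
      next
        case 5 then show ?thesis using IH key_v[of "q (Suc j)"] n1 y1 by auto
      qed
    qed
  qed
  then show False using east[OF qm] by auto
qed



definition FF :: "(cell \<Rightarrow> fstate) \<Rightarrow> (cell \<Rightarrow> fstate)" where "FF = glob NF fF"

lemma FF_eq: "FF c z = fF_loc (c z) (c (fst z, snd z + 1)) (c (fst z + 1, snd z))"
  unfolding FF_def glob_def fF_def pat_def NF_def addp_def by simp

definition d10 :: "nat \<Rightarrow> cell \<Rightarrow> fstate" where
  "d10 k z = (if fst z = 0 \<and> snd z > - int k then Down else Zero)"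

definition d11 :: "int \<Rightarrow> int \<Rightarrow> nat \<Rightarrow> cell \<Rightarrow> fstate" where
  "d11 M L k z = (if fst z = 0 then (if snd z > - int k then (if snd z = -M \<and> int k > L then LeftDown else Down) else Zero)
     else if snd z = -M \<and> fst z > L - int k then Left else Zero)"

lemma FF_d10: "FF (d10 k) = d10 (Suc k)"
proof
  fix z :: cell
  obtain x y where z: "z = (x,y)" by (cases z)
  show "FF (d10 k) z = d10 (Suc k) z"
    unfolding FF_eq z by (auto simp: d10_def fF_loc_def)
qed

lemma FF_d11:
  assumes M: "1 \<le> M" and L: "M + 1 \<le> L"
  shows "FF (d11 M L k) = d11 M L (Suc k)"
proof
  fix z :: cell
  obtain x y where z: "z = (x,y)" by (cases z)
  show "FF (d11 M L k) z = d11 M L (Suc k) z"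
  proof (cases "x = 0")
    case True
    then show ?thesis unfolding FF_eq z using M L by (auto simp: d11_def fF_loc_def)
  next
    case False
    then show ?thesis unfolding FF_eq z using M L by (auto simp: d11_def fF_loc_def)
  qed
qed

lemma FF_zero: "FF (\<lambda>_. Zero) = (\<lambda>_. Zero)"
  by (rule ext) (simp add: FF_eq fF_loc_def)

lemma d10_pow: "(FF ^^ k) (d10 0) = d10 k"
  by (induction k) (simp_all add: FF_d10)

lemma d11_pow: "1 \<le> M \<Longrightarrow> M + 1 \<le> L \<Longrightarrow> (FF ^^ k) (d11 M L 0) = d11 M L k"
  by (induction k) (simp_all add: FF_d11)

lemma d10_Suc: "d10 (Suc k) = (d10 k)((0, - int k) := Down)"
  by (rule ext) (auto simp: d10_def)

lemma d11_Suc: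
  assumes M: "1 \<le> M" and L: "M + 1 \<le> L" and k: "int k > L"
  shows "d11 M L (Suc k) = ((d11 M L k)((L - int k, -M) := Left))((0, - int k) := Down)"
proof
  fix z :: cell
  obtain x y where z: "z = (x,y)" by (cases z)
  show "d11 M L (Suc k) z = (((d11 M L k)((L - int k, -M) := Left))((0, - int k) := Down)) z"
    unfolding z using M L k by (auto simp: d11_def)
qed



lemma divmod_bounds:
  fixes b x a :: int
  assumes "b > 0"
  shows "a + b * ((x - a) div b) \<le> x \<and> x < a + b * ((x - a) div b) + b"
proof -
  have e: "b * ((x - a) div b) + (x - a) mod b = x - a" by (rule mult_div_mod_eq)
  have "0 \<le> (x - a) mod b" "(x - a) mod b < b" using assms by simp_all
  then show ?thesis using e by linarith
qed

lemma le_mult_self: "(1::int) \<le> b \<Longrightarrow> 0 \<le> y \<Longrightarrow> y \<le> b * y"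
  using mult_right_mono[of 1 b y] by simp

lemma const_run:
  assumes "\<forall>i. a \<le> i \<and> i < b \<longrightarrow> f (Suc i) = f i" "a \<le> b"
  shows "f b = f a"
  using assms(2,1) by (induction rule: dec_induct) auto

lemma VN2_adj: "n \<in> VN2 \<Longrightarrow> adj w (addp w n)"
  unfolding VN2_def adj_def addp_def by auto

lemma VN2_0: "(0,0) \<in> VN2" unfolding VN2_def by simp

lemma addp_0: "addp w (0,0) = w" unfolding addp_def by simp

lemma conf_UNIV: "conf UNIV = UNIV" by (auto simp: conf_def)

locale simU =
  fixes QU :: "'q set" and fU :: "(cell \<Rightarrow> 'q) \<Rightarrow> 'q" and T :: nat and a1 a2 b1 b2 :: int
    and C :: "cell set" and phi :: "(cell \<Rightarrow> fstate) \<Rightarrow> cell \<Rightarrow> 'q"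
  assumes Tpos: "T > 0" and b1: "b1 > 0" and b2: "b2 > 0" and finC: "finite C"
    and phiQ: "\<forall>p. (\<forall>n\<in>C. p n \<in> (UNIV::fstate set)) \<longrightarrow> (\<forall>r\<in>block a1 a2 b1 b2. phi p r \<in> QU)"
    and injP: "inj_on (phibar a1 a2 b1 b2 C phi) (conf (UNIV::fstate set))"
    and comm: "\<forall>c\<in>conf (UNIV::fstate set). phibar a1 a2 b1 b2 C phi (glob NF fF c) =
                       (glob VN2 fU ^^ T) (phibar a1 a2 b1 b2 C phi c)"
    and kch: "k_change 1 QU VN2 fU"
begin

definition "G = glob VN2 fU"
definition "Phi = phibar a1 a2 b1 b2 C phi"
definition "bz w = ((fst w - a1) div b1, (snd w - a2) div b2)"
definition "Rc = Max (insert 0 ((\<lambda>n. max \<bar>fst n\<bar> \<bar>snd n\<bar>) ` C))"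

lemma Rc: assumes "n \<in> C" shows "\<bar>fst n\<bar> \<le> Rc \<and> \<bar>snd n\<bar> \<le> Rc"
proof -
  have "max \<bar>fst n\<bar> \<bar>snd n\<bar> \<le> Rc" unfolding Rc_def by (rule Max_ge) (use finC assms in auto)
  then show ?thesis by simp
qed

lemma Rc0: "0 \<le> Rc" unfolding Rc_def by (rule Max_ge) (use finC in auto)

lemma bz_fst: "a1 + b1 * fst (bz w) \<le> fst w \<and> fst w < a1 + b1 * fst (bz w) + b1"
  unfolding bz_def using divmod_bounds[OF b1] by simp

lemma bz_snd: "a2 + b2 * snd (bz w) \<le> snd w \<and> snd w < a2 + b2 * snd (bz w) + b2"
  unfolding bz_def using divmod_bounds[OF b2] by simp

lemma Phi_apply: "Phi c w = phi (pat C c (bz w)) (fst w - b1 * fst (bz w), snd w - b2 * snd (bz w))"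
  by (simp add: Phi_def phibar_def bz_def Let_def)

lemma Phi_loc:
  assumes "\<forall>n\<in>C. c (addp (bz w) n) = c' (addp (bz w) n)"
  shows "Phi c w = Phi c' w"
proof -
  have "pat C c (bz w) = pat C c' (bz w)" using assms by (auto simp: pat_def)
  then show ?thesis by (simp add: Phi_apply)
qed

lemma Phi_diff: "Phi c w \<noteq> Phi c' w \<Longrightarrow> \<exists>n\<in>C. c (addp (bz w) n) \<noteq> c' (addp (bz w) n)"
  using Phi_loc by blast

lemma Phi_inj: "c \<noteq> c' \<Longrightarrow> Phi c \<noteq> Phi c'"
  using injP conf_UNIV unfolding Phi_def inj_on_def by auto

lemma Phi_single:
  assumes "v \<noteq> c s"
  shows "\<exists>w. Phi c w \<noteq> Phi (c(s := v)) w \<and> (\<exists>n\<in>C. addp (bz w) n = s)"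
proof -
  have "c \<noteq> c(s := v)" using assms by (metis fun_upd_same)
  then have "Phi c \<noteq> Phi (c(s := v))" by (rule Phi_inj)
  then obtain w where w: "Phi c w \<noteq> Phi (c(s := v)) w" by blast
  then obtain n where "n \<in> C" "c (addp (bz w) n) \<noteq> (c(s := v)) (addp (bz w) n)"
    using Phi_diff by blast
  then have "addp (bz w) n = s" by (cases "addp (bz w) n = s") auto
  then show ?thesis using w \<open>n \<in> C\<close> by blast
qed

lemma Phi_comm: "Phi (FF c) = (G ^^ T) (Phi c)"
  using comm conf_UNIV unfolding FF_def G_def Phi_def by auto

lemma Phi_pow: "Phi ((FF ^^ k) c) = (G ^^ (k * T)) (Phi c)"
proof (induction k)
  case 0 then show ?case by simp
next
  case (Suc k)
  have "Phi ((FF ^^ Suc k) c) = (G ^^ T) ((G ^^ (k * T)) (Phi c))"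
    using Phi_comm[of "(FF ^^ k) c"] Suc.IH by simp
  also have "\<dots> = (G ^^ (T + k * T)) (Phi c)" by (simp add: funpow_add)
  finally show ?case by simp
qed

lemma Phi_conf: "Phi c \<in> conf QU"
proof -
  have "Phi c w \<in> QU" for w
  proof -
    have "(fst w - b1 * fst (bz w), snd w - b2 * snd (bz w)) \<in> block a1 a2 b1 b2"
      using bz_fst[of w] bz_snd[of w] unfolding block_def by auto
    then show ?thesis using phiQ unfolding Phi_apply by blast
  qed
  then show ?thesis unfolding conf_def by blast
qed

lemma G_loc:
  assumes "\<forall>n\<in>VN2. x (addp w n) = y (addp w n)"
  shows "G x w = G y w"
proof -
  have "pat VN2 x w = pat VN2 y w" using assms by (auto simp: pat_def)
  then show ?thesis by (simp add: G_def glob_def)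
qed

lemma stay:
  assumes x: "x \<in> conf QU" and ch: "(G ^^ s) x w \<noteq> x w" and su: "s \<le> u"
  shows "(G ^^ u) x w = (G ^^ s) x w"
proof (rule ccontr)
  assume ne: "(G ^^ u) x w \<noteq> (G ^^ s) x w"
  define S where "S = {t::nat. (G ^^ Suc t) x w \<noteq> (G ^^ t) x w}"
  have "\<forall>z. finite {t::nat. (G ^^ Suc t) x z \<noteq> (G ^^ t) x z} \<and> card {t::nat. (G ^^ Suc t) x z \<noteq> (G ^^ t) x z} \<le> 1"
    using kch x unfolding k_change_def G_def by blast
  then have fin: "finite S" and card: "card S \<le> 1" unfolding S_def by blast+
  obtain i where i: "i < s" "i \<in> S"
  proof (rule ccontr)
    assume "\<not> thesis"
    then have "\<forall>i. 0 \<le> i \<and> i < s \<longrightarrow> (G ^^ Suc i) x w = (G ^^ i) x w" using that S_def by auto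
    from const_run[OF this] have "(G ^^ s) x w = (G ^^ 0) x w" by simp
    then show False using ch by simp
  qed
  obtain j where j: "s \<le> j" "j < u" "j \<in> S"
  proof (rule ccontr)
    assume "\<not> thesis"
    then have "\<forall>i. s \<le> i \<and> i < u \<longrightarrow> (G ^^ Suc i) x w = (G ^^ i) x w" using that S_def by auto
    from const_run[OF this su] show False using ne by simp
  qed
  have "{i, j} \<subseteq> S" using i j by auto
  then have "card {i, j} \<le> card S" using fin by (rule card_mono[rotated])
  moreover have "card {i, j} = 2" using i j by auto
  ultimately show False using card by simp
qed

end



context simU begin

definition "x00 = Phi (\<lambda>_. Zero)"
definition "x10 = Phi (d10 0)"
definition "ch u = {w. (G ^^ u) x10 w \<noteq> x10 w}"

lemma G_x00: "G x00 = x00"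
proof
  fix w
  show "G x00 w = x00 w"
  proof (rule ccontr)
    assume ne: "G x00 w \<noteq> x00 w"
    have "(G ^^ T) x00 = x00" using Phi_comm[of "\<lambda>_. Zero"] FF_zero unfolding x00_def by simp
    moreover have "(G ^^ T) x00 w = (G ^^ 1) x00 w"
      using stay[of x00 1 w T] Phi_conf ne Tpos unfolding x00_def by simp
    ultimately show False using ne by simp
  qed
qed

lemma ch_mono: "u \<le> u' \<Longrightarrow> w \<in> ch u \<Longrightarrow> w \<in> ch u'"
  using stay[of x10 u w u'] Phi_conf unfolding ch_def x10_def by auto

lemma x10_pow: "(G ^^ (k * T)) x10 = Phi (d10 k)"
  using Phi_pow[of k "d10 0"] d10_pow unfolding x10_def by simp

lemma ch_band: assumes "w \<in> ch u" shows "\<bar>fst (bz w)\<bar> \<le> Rc"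
proof -
  have "u \<le> u * T" using Tpos by simp
  then have "w \<in> ch (u * T)" using ch_mono assms by blast
  then have "Phi (d10 u) w \<noteq> Phi (d10 0) w" unfolding ch_def x10_pow by (simp add: x10_def)
  then obtain n where n: "n \<in> C" "d10 u (addp (bz w) n) \<noteq> d10 0 (addp (bz w) n)" using Phi_diff by blast
  then have "fst (bz w) + fst n = 0" unfolding d10_def addp_def by (auto split: if_splits)
  then have "fst (bz w) = - fst n" by linarith
  then show ?thesis using Rc[OF n(1)] by simp
qed

lemma ch1_north: assumes "w \<in> ch 1" shows "a2 + b2 * (1 - Rc) - 1 \<le> snd w"
proof -
  have g: "G x10 w \<noteq> x10 w" using assms unfolding ch_def by simp
  have "\<exists>n\<in>VN2. x10 (addp w n) \<noteq> x00 (addp w n)"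
  proof (rule ccontr)
    assume nn: "\<not> ?thesis"
    then have "G x10 w = G x00 w" using G_loc by blast
    also have "\<dots> = x00 w" using G_x00 by simp
    also have "\<dots> = x10 w" using nn VN2_0 addp_0 by metis
    finally show False using g by simp
  qed
  then obtain n where n: "n \<in> VN2" "x10 (addp w n) \<noteq> x00 (addp w n)" by blast
  define v where "v = addp w n"
  obtain m where m: "m \<in> C" "d10 0 (addp (bz v) m) \<noteq> Zero"
    using Phi_diff[of "d10 0" v "\<lambda>_. Zero"] n(2) unfolding v_def x10_def x00_def by blast
  then have "snd (bz v) + snd m > 0" unfolding d10_def addp_def by (auto split: if_splits)
  then have "snd (bz v) \<ge> 1 - Rc" using Rc[OF m(1)] unfolding abs_le_iff by linarith
  then have "b2 * (1 - Rc) \<le> b2 * snd (bz v)" using b2 by (simp add: mult_left_mono)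
  then have "a2 + b2 * (1 - Rc) \<le> snd v" using bz_snd[of v] by linarith
  moreover have "snd v \<le> snd w + 1" using n(1) unfolding v_def VN2_def addp_def by auto
  ultimately show ?thesis by simp
qed

lemma ch_chain:
  "1 \<le> u \<Longrightarrow> w \<in> ch u \<Longrightarrow> \<exists>p n. p 0 = w \<and> (\<forall>i<n. adj (p i) (p (Suc i))) \<and> (\<forall>i\<le>n. p i \<in> ch u) \<and> p n \<in> ch 1"
proof (induction u arbitrary: w)
  case 0 then show ?case by simp
next
  case (Suc u)
  show ?case
  proof (cases "u = 0")
    case True
    then show ?thesis using Suc.prems by (intro exI[of _ "\<lambda>_. w"] exI[of _ 0]) auto
  next
    case False
    show ?thesis
    proof (cases "\<exists>n\<in>VN2. addp w n \<in> ch u")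
      case True
      then obtain n where n: "n \<in> VN2" "addp w n \<in> ch u" by blast
      obtain p k where p: "p 0 = addp w n" "\<forall>i<k. adj (p i) (p (Suc i))" "\<forall>i\<le>k. p i \<in> ch u" "p k \<in> ch 1"
        using Suc.IH[OF _ n(2)] False by auto
      define p' where "p' i = (if i = 0 then w else p (i - 1))" for i
      have "\<forall>i<Suc k. adj (p' i) (p' (Suc i))"
      proof (intro allI impI)
        fix i assume "i < Suc k"
        then show "adj (p' i) (p' (Suc i))"
          using p(1,2) VN2_adj[OF n(1), of w] unfolding p'_def
          by (cases i) auto
      qed
      moreover have "\<forall>i\<le>Suc k. p' i \<in> ch (Suc u)"
      proof (intro allI impI)
        fix i assume "i \<le> Suc k"
        then show "p' i \<in> ch (Suc u)"
          using p(3) Suc.prems ch_mono[of u "Suc u"] unfolding p'_def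
          by (cases i) auto
      qed
      moreover have "p' (Suc k) \<in> ch 1" using p(4) unfolding p'_def by simp
      ultimately show ?thesis by (intro exI[of _ p'] exI[of _ "Suc k"]) (simp add: p'_def)
    next
      case nb: False
      have "\<forall>n\<in>VN2. (G ^^ u) x10 (addp w n) = x10 (addp w n)" using nb unfolding ch_def by auto
      then have "G ((G ^^ u) x10) w = G x10 w" by (rule G_loc)
      then have "w \<in> ch 1" using Suc.prems unfolding ch_def by simp
      then show ?thesis using Suc.prems(2) by (intro exI[of _ "\<lambda>_. w"] exI[of _ 0]) auto
    qed
  qed
qed

lemma ch_south: "\<exists>w. w \<in> ch (Suc k * T) \<and> snd w < a2 + b2 * (1 - int k + Rc)"
proof -
  have ne: "Down \<noteq> d10 k (0, - int k)" by (simp add: d10_def)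
  obtain w n where w: "Phi (d10 k) w \<noteq> Phi ((d10 k)((0, - int k) := Down)) w" and n: "n \<in> C" "addp (bz w) n = (0, - int k)"
    using Phi_single[of Down "d10 k" "(0, - int k)", OF ne] by blast
  have w2: "(G ^^ (k * T)) x10 w \<noteq> (G ^^ (Suc k * T)) x10 w"
    using w unfolding x10_pow d10_Suc[symmetric] by simp
  have inch: "w \<in> ch (Suc k * T)"
  proof (rule ccontr)
    assume a: "w \<notin> ch (Suc k * T)"
    have "k * T \<le> Suc k * T" by simp
    then have "w \<notin> ch (k * T)" using a ch_mono[of "k * T" "Suc k * T" w] by blast
    then show False using a w2 unfolding ch_def by simp
  qed
  have "snd (bz w) = - int k - snd n" using n(2) unfolding addp_def by auto
  then have "snd (bz w) + 1 \<le> 1 - int k + Rc" using Rc[OF n(1)] unfolding abs_le_iff by linarith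
  then have "b2 * (snd (bz w) + 1) \<le> b2 * (1 - int k + Rc)" using b2 by (simp add: mult_left_mono)
  then have "snd w < a2 + b2 * (1 - int k + Rc)" using bz_snd[of w] by (simp add: algebra_simps)
  then show ?thesis using inch by blast
qed

end



context simU begin

definition "x11 M L = Phi (d11 M L 0)"
definition "DD M L u = {w. (G ^^ u) (x11 M L) w \<noteq> (G ^^ u) x10 w}"

context
  fixes M L :: int
  assumes M1: "1 \<le> M" and hML: "M + 1 \<le> L"
begin

lemma x11_pow: "(G ^^ (k * T)) (x11 M L) = Phi (d11 M L k)"
  using Phi_pow[of k "d11 M L 0"] d11_pow[OF M1 hML] unfolding x11_def by simp

lemma D_back: assumes "w \<in> DD M L (Suc u)" shows "\<exists>n\<in>VN2. addp w n \<in> DD M L u"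
proof (rule ccontr)
  assume "\<not> ?thesis"
  then have "\<forall>n\<in>VN2. (G ^^ u) (x11 M L) (addp w n) = (G ^^ u) x10 (addp w n)" unfolding DD_def by auto
  then have "G ((G ^^ u) (x11 M L)) w = G ((G ^^ u) x10) w" by (rule G_loc)
  then show False using assms unfolding DD_def by simp
qed

lemma D_speed: "w \<in> DD M L (u + r) \<Longrightarrow> \<exists>w'. w' \<in> DD M L u \<and> \<bar>fst w - fst w'\<bar> \<le> int r \<and> \<bar>snd w - snd w'\<bar> \<le> int r"
proof (induction r arbitrary: w)
  case 0 then show ?case by (intro exI[of _ w]) simp
next
  case (Suc r)
  then have "w \<in> DD M L (Suc (u + r))" by simp
  then obtain n where n: "n \<in> VN2" "addp w n \<in> DD M L (u + r)" using D_back by blast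
  then obtain w' where w': "w' \<in> DD M L u" "\<bar>fst (addp w n) - fst w'\<bar> \<le> int r" "\<bar>snd (addp w n) - snd w'\<bar> \<le> int r"
    using Suc.IH by blast
  have "\<bar>fst n\<bar> \<le> 1" "\<bar>snd n\<bar> \<le> 1" using n(1) unfolding VN2_def by auto
  then show ?case using w' unfolding addp_def abs_le_iff by (intro exI[of _ w']) auto
qed

lemma D0_east: assumes "w \<in> DD M L 0" shows "a1 + b1 * (L - Rc + 1) \<le> fst w"
proof -
  have "Phi (d11 M L 0) w \<noteq> Phi (d10 0) w" using assms unfolding DD_def x11_def x10_def by simp
  then obtain m where m: "m \<in> C" "d11 M L 0 (addp (bz w) m) \<noteq> d10 0 (addp (bz w) m)" using Phi_diff by blast
  have "fst (addp (bz w) m) > L" using m(2) hML M1 unfolding d11_def d10_def by (auto split: if_splits)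
  then have "fst (bz w) \<ge> L - Rc + 1" using Rc[OF m(1)] unfolding addp_def abs_le_iff by simp
  then have "b1 * (L - Rc + 1) \<le> b1 * fst (bz w)" using b1 by (simp add: mult_left_mono)
  then show ?thesis using bz_fst[of w] by linarith
qed

lemma D_band: assumes "w \<in> DD M L u"
  shows "a2 + b2 * (- M - Rc) - int T \<le> snd w \<and> snd w \<le> a2 + b2 * (- M + Rc + 1) + int T"
proof -
  define k where "k = u div T"
  define r where "r = u mod T"
  have u: "u = k * T + r" unfolding k_def r_def by simp
  have rT: "r < T" unfolding r_def using Tpos by simp
  obtain w' where w': "w' \<in> DD M L (k * T)" "\<bar>snd w - snd w'\<bar> \<le> int r"
    using D_speed[of w "k * T" r] assms u by auto
  have "Phi (d11 M L k) w' \<noteq> Phi (d10 k) w'" using w'(1) unfolding DD_def x11_pow x10_pow by simp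
  then obtain m where m: "m \<in> C" "d11 M L k (addp (bz w') m) \<noteq> d10 k (addp (bz w') m)" using Phi_diff by blast
  have "snd (addp (bz w') m) = - M" using m(2) unfolding d11_def d10_def by (auto split: if_splits)
  then have s: "- M - Rc \<le> snd (bz w')" "snd (bz w') \<le> - M + Rc"
    using Rc[OF m(1)] unfolding addp_def abs_le_iff by auto
  have "b2 * (- M - Rc) \<le> b2 * snd (bz w')" using s(1) b2 by (simp add: mult_left_mono)
  moreover have "b2 * (snd (bz w') + 1) \<le> b2 * (- M + Rc + 1)" using s(2) b2 by (simp add: mult_left_mono)
  ultimately show ?thesis using bz_snd[of w'] w'(2) rT unfolding abs_le_iff by (simp add: algebra_simps)
qed

lemma D_chain: "w \<in> DD M L u \<Longrightarrow> \<exists>q. q 0 = w \<and> (\<forall>j<u. adj (q j) (q (Suc j))) \<and> (\<forall>j\<le>u. q j \<in> DD M L (u - j))"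
proof (induction u arbitrary: w)
  case 0 then show ?case by (intro exI[of _ "\<lambda>_. w"]) simp
next
  case (Suc u)
  obtain n where n: "n \<in> VN2" "addp w n \<in> DD M L u" using D_back Suc.prems by blast
  obtain q where q: "q 0 = addp w n" "\<forall>j<u. adj (q j) (q (Suc j))" "\<forall>j\<le>u. q j \<in> DD M L (u - j)"
    using Suc.IH[OF n(2)] by blast
  define q' where "q' j = (if j = 0 then w else q (j - 1))" for j
  have "\<forall>j<Suc u. adj (q' j) (q' (Suc j))"
  proof (intro allI impI)
    fix j assume "j < Suc u"
    then show "adj (q' j) (q' (Suc j))"
      using q(1,2) VN2_adj[OF n(1), of w] unfolding q'_def by (cases j) auto
  qed
  moreover have "\<forall>j\<le>Suc u. q' j \<in> DD M L (Suc u - j)"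
  proof (intro allI impI)
    fix j assume "j \<le> Suc u"
    then show "q' j \<in> DD M L (Suc u - j)"
      using q(3) Suc.prems unfolding q'_def by (cases j) auto
  qed
  ultimately show ?case by (intro exI[of _ q']) (simp add: q'_def)
qed

lemma ZD:
  assumes t0: "int t0 \<le> b1 * (L - 2 * Rc)" and w: "w \<in> ch t0"
  shows "w \<notin> DD M L u"
proof -
  have band: "fst w < a1 + b1 * (Rc + 1)"
  proof -
    have "fst (bz w) \<le> Rc" using ch_band[OF w] unfolding abs_le_iff by linarith
    then have "b1 * fst (bz w) \<le> b1 * Rc" using b1 by (simp add: mult_left_mono)
    moreover have "b1 * (Rc + 1) = b1 * Rc + b1" by (simp add: algebra_simps)
    ultimately show ?thesis using bz_fst[of w] by linarith
  qed
  have early: "w \<notin> DD M L v" if "v \<le> t0" for v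
  proof
    assume "w \<in> DD M L v"
    then obtain w' where w': "w' \<in> DD M L 0" "\<bar>fst w - fst w'\<bar> \<le> int v" using D_speed[of w 0 v] by auto
    have "a1 + b1 * (L - Rc + 1) \<le> fst w'" by (rule D0_east[OF w'(1)])
    moreover have "b1 * (L - Rc + 1) = b1 * (Rc + 1) + b1 * (L - 2 * Rc)" by (simp add: algebra_simps)
    ultimately show False using band w'(2) that t0 unfolding abs_le_iff by linarith
  qed
  show ?thesis
  proof (cases "u \<le> t0")
    case True then show ?thesis using early by blast
  next
    case False
    have e0: "(G ^^ t0) (x11 M L) w = (G ^^ t0) x10 w" using early[of t0] unfolding DD_def by simp
    have e00: "x11 M L w = x10 w" using early[of 0] unfolding DD_def by simp
    have c10: "(G ^^ t0) x10 w \<noteq> x10 w" using w unfolding ch_def by simp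
    have "(G ^^ u) x10 w = (G ^^ t0) x10 w"
      using stay[of x10 t0 w u] c10 False Phi_conf unfolding x10_def by simp
    moreover have "(G ^^ u) (x11 M L) w = (G ^^ t0) (x11 M L) w"
      using stay[of "x11 M L" t0 w u] c10 e0 e00 False Phi_conf unfolding x11_def by simp
    ultimately show ?thesis using e0 unfolding DD_def by simp
  qed
qed

lemma D_west:
  assumes kw: "int kw > L" and sep: "L - int kw + 2 * Rc < 0"
  shows "\<exists>u w. w \<in> DD M L u \<and> fst (bz w) \<le> L - int kw + Rc"
proof -
  define s1 where "s1 = (L - int kw, - M)"
  define s2 where "s2 = (0::int, - int kw)"
  define c' where "c' = (d11 M L kw)(s1 := Left)"
  have ne: "Left \<noteq> d11 M L kw s1" unfolding s1_def d11_def using kw by auto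
  obtain w n where w: "Phi (d11 M L kw) w \<noteq> Phi c' w" and n: "n \<in> C" "addp (bz w) n = s1"
    using Phi_single[of Left "d11 M L kw" s1, OF ne] unfolding c'_def by blast
  have fb: "fst (bz w) = L - int kw - fst n" using n(2) unfolding s1_def addp_def by auto
  have "\<forall>m\<in>C. (c'(s2 := Down)) (addp (bz w) m) = c' (addp (bz w) m)"
  proof
    fix m assume m: "m \<in> C"
    have "fst (addp (bz w) m) \<noteq> 0" using fb Rc[OF m] Rc[OF n(1)] sep unfolding addp_def abs_le_iff by auto
    then show "(c'(s2 := Down)) (addp (bz w) m) = c' (addp (bz w) m)" unfolding s2_def by auto
  qed
  then have "Phi (c'(s2 := Down)) w = Phi c' w" by (rule Phi_loc)
  moreover have "d11 M L (Suc kw) = c'(s2 := Down)" unfolding c'_def s1_def s2_def using d11_Suc[OF M1 hML kw] .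
  ultimately have dif: "(G ^^ (Suc kw * T)) (x11 M L) w \<noteq> (G ^^ (kw * T)) (x11 M L) w"
    using w unfolding x11_pow by simp
  have fbw: "fst (bz w) \<le> L - int kw + Rc" using fb Rc[OF n(1)] unfolding abs_le_iff by linarith
  have nch: "(G ^^ v) x10 w = x10 w" for v
  proof (rule ccontr)
    assume "\<not> ?thesis"
    then have "w \<in> ch v" unfolding ch_def by simp
    then have "\<bar>fst (bz w)\<bar> \<le> Rc" by (rule ch_band)
    then show False using fbw sep unfolding abs_le_iff by linarith
  qed
  have "w \<in> DD M L (Suc kw * T) \<or> w \<in> DD M L (kw * T)"
    using dif nch unfolding DD_def by auto
  then show ?thesis using fbw by blast
qed

end

end



context simU begin

lemma contra: False
proof -
  define R where "R = Rc"
  have R0: "0 \<le> R" using Rc0 R_def by simp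
  define X where "X = \<bar>a1\<bar> + b1 * (R + 1)"
  define M where "M = 2 * R + int T + 2"
  define kz where "kz = nat (M + 2 * R + int T + 1)"
  define t0 where "t0 = Suc kz * T"
  define L where "L = 2 * R + int t0 + 2 * \<bar>a1\<bar> + M + 2"
  define kw where "kw = nat (L + 2 * R + 2 * \<bar>a1\<bar> + 2)"
  define S where "S = a2 + b2 * (- M - R) - int T - 1"
  define N where "N = a2 + b2 * (1 - R) - 1"
  have T1: "1 \<le> int T" using Tpos by simp
  have b1': "1 \<le> b1" and b2': "1 \<le> b2" using b1 b2 by simp_all
  have M1: "1 \<le> M" and hML: "M + 1 \<le> L" unfolding M_def L_def using R0 by simp_all
  have kzi: "int kz = M + 2 * R + int T + 1" unfolding kz_def M_def using R0 by simp
  have kwi: "int kw = L + 2 * R + 2 * \<bar>a1\<bar> + 2" unfolding kw_def L_def M_def using R0 by simp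
  have kw: "int kw > L" and sep: "L - int kw + 2 * Rc < 0" using kwi R0 R_def by simp_all
  have t01: "1 \<le> t0" unfolding t0_def using Tpos by simp
  obtain wS where wS: "wS \<in> ch t0" "snd wS < a2 + b2 * (1 - int kz + Rc)"
    using ch_south[of kz] unfolding t0_def by blast
  have "b2 * (1 - int kz + Rc) = b2 * (- M - R) - b2 * int T"
    using kzi R_def by (simp add: algebra_simps)
  moreover have "int T \<le> b2 * int T" by (rule le_mult_self[OF b2']) simp
  ultimately have pS: "snd wS \<le> S" using wS(2) unfolding S_def by linarith
  obtain p n where p: "p 0 = wS" "\<forall>i<n. adj (p i) (p (Suc i))" "\<forall>i\<le>n. p i \<in> ch t0" "p n \<in> ch 1"
    using ch_chain[OF t01 wS(1)] by blast
  have pN: "N \<le> snd (p n)" using ch1_north[OF p(4)] unfolding N_def R_def by simp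
  have pX: "\<forall>i\<le>n. \<bar>fst (p i)\<bar> \<le> X"
  proof (intro allI impI)
    fix i assume "i \<le> n"
    then have "p i \<in> ch t0" using p(3) by simp
    then have "\<bar>fst (bz (p i))\<bar> \<le> R" using ch_band unfolding R_def by blast
    then have bb: "- R \<le> fst (bz (p i))" "fst (bz (p i)) \<le> R" unfolding abs_le_iff by linarith+
    have "b1 * (- R) \<le> b1 * fst (bz (p i))" using bb(1) b1 by (intro mult_left_mono) auto
    moreover have "b1 * fst (bz (p i)) \<le> b1 * R" using bb(2) b1 by (intro mult_left_mono) auto
    moreover have "b1 * (R + 1) = b1 * R + b1" "b1 * (- R) = - (b1 * R)" by (simp_all add: algebra_simps)
    moreover have "0 \<le> b1 * R" using b1 R0 by simp
    ultimately show "\<bar>fst (p i)\<bar> \<le> X" using bz_fst[of "p i"] unfolding X_def abs_le_iff by linarith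
  qed
  obtain uW wW where wW: "wW \<in> DD M L uW" "fst (bz wW) \<le> L - int kw + Rc"
    using D_west[OF M1 hML kw sep] by blast
  have "fst (bz wW) + 1 \<le> - R - 2 * \<bar>a1\<bar> - 1" using wW(2) kwi R_def by simp
  then have "b1 * (fst (bz wW) + 1) \<le> b1 * (- R - 2 * \<bar>a1\<bar> - 1)" using b1 by (intro mult_left_mono) auto
  moreover have "b1 * (- R - 2 * \<bar>a1\<bar> - 1) = - (b1 * (R + 1)) - b1 * (2 * \<bar>a1\<bar>)" by (simp add: algebra_simps)
  moreover have "2 * \<bar>a1\<bar> \<le> b1 * (2 * \<bar>a1\<bar>)" by (rule le_mult_self[OF b1']) simp
  moreover have "a1 \<le> \<bar>a1\<bar>" by simp
  moreover have "b1 * (fst (bz wW) + 1) = b1 * fst (bz wW) + b1" by (simp add: algebra_simps)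
  ultimately have qW: "fst wW < - X" using bz_fst[of wW] unfolding X_def by linarith
  obtain q where q: "q 0 = wW" "\<forall>j<uW. adj (q j) (q (Suc j))" "\<forall>j\<le>uW. q j \<in> DD M L (uW - j)"
    using D_chain[OF M1 hML wW(1)] by blast
  have "q uW \<in> DD M L 0" using q(3) by auto
  then have e: "a1 + b1 * (L - Rc + 1) \<le> fst (q uW)" by (rule D0_east[OF M1 hML])
  have "b1 * (L - Rc + 1) = b1 * (R + 1) + b1 * (L - 2 * R)" using R_def by (simp add: algebra_simps)
  moreover have "L - 2 * R \<le> b1 * (L - 2 * R)" by (rule le_mult_self[OF b1']) (simp add: L_def M_def R0)
  moreover have "- \<bar>a1\<bar> \<le> a1" by simp
  moreover have "L - 2 * R > 2 * \<bar>a1\<bar>" unfolding L_def M_def using R0 by simp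
  ultimately have qE: "fst (q uW) > X" using e unfolding X_def R_def by linarith
  have qY: "\<forall>j\<le>uW. S < snd (q j) \<and> snd (q j) < N"
  proof (intro allI impI)
    fix j assume "j \<le> uW"
    then have "q j \<in> DD M L (uW - j)" using q(3) by simp
    from D_band[OF M1 hML this]
    have bd: "a2 + b2 * (- M - Rc) - int T \<le> snd (q j)" "snd (q j) \<le> a2 + b2 * (- M + Rc + 1) + int T" by auto
    have "b2 * (1 - R) = b2 * (- M + R + 1) + b2 * (int T + 2)" unfolding M_def by (simp add: algebra_simps)
    moreover have "int T + 2 \<le> b2 * (int T + 2)" by (rule le_mult_self[OF b2']) simp
    ultimately show "S < snd (q j) \<and> snd (q j) < N" using bd unfolding S_def N_def R_def by linarith
  qed
  obtain i j where ij: "i \<le> n" "j \<le> uW" "p i = q j"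
    using crossing[OF p(2) q(2) _ pN pX _ qE qY] pS qW p(1) q(1) by blast
  have "int t0 \<le> b1 * (L - 2 * Rc)"
  proof -
    have "L - 2 * R \<le> b1 * (L - 2 * R)" by (rule le_mult_self[OF b1']) (simp add: L_def M_def R0)
    moreover have "int t0 \<le> L - 2 * R" unfolding L_def using M1 by simp
    ultimately show ?thesis using R_def by simp
  qed
  from ZD[OF M1 hML this] have "p i \<notin> DD M L (uW - j)" using p(3) ij(1) by blast
  then show False using q(3) ij by simp
qed

end



lemma part1:
  fixes QU :: "'q set" and fU
  assumes kch: "k_change 1 QU VN2 fU"
  shows "\<not> simulates QU VN2 fU (UNIV::fstate set) NF fF"
proof
  assume "simulates QU VN2 fU (UNIV::fstate set) NF fF"
  then obtain T a1 a2 b1 b2 C phi where h: "T > 0" "b1 > 0" "b2 > 0" "finite C"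
    "\<forall>p. (\<forall>n\<in>C. p n \<in> (UNIV::fstate set)) \<longrightarrow> (\<forall>r\<in>block a1 a2 b1 b2. phi p r \<in> QU)"
    "inj_on (phibar a1 a2 b1 b2 C phi) (conf (UNIV::fstate set))"
    "\<forall>c\<in>conf (UNIV::fstate set). phibar a1 a2 b1 b2 C phi (glob NF fF c) =
                       (glob VN2 fU ^^ T) (phibar a1 a2 b1 b2 C phi c)"
    unfolding simulates_def by blast
  interpret simU QU fU T a1 a2 b1 b2 C phi
    using h kch by unfold_locales auto
  show False by (rule contra)
qed

definition enc :: "fstate \<Rightarrow> nat" where
  "enc a = (case a of Zero \<Rightarrow> 0 | Left \<Rightarrow> 1 | Down \<Rightarrow> 2 | LeftDown \<Rightarrow> 3)"

definition dec :: "nat \<Rightarrow> fstate" where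
  "dec n = (if n = 0 then Zero else if n = 1 then Left else if n = 2 then Down else LeftDown)"

lemma dec_enc[simp]: "dec (enc a) = a" by (cases a) (simp_all add: enc_def dec_def)

lemma enc_inj: "inj enc" by (metis dec_enc injI)

lemma fstate_UNIV: "(UNIV :: fstate set) = {Zero, Left, Down, LeftDown}"
  using fstate.exhaust by auto

definition fGn :: "(cell \<Rightarrow> nat) \<Rightarrow> nat" where
  "fGn p = enc (fF_loc (dec (p (0,0))) (dec (p (0,1))) (dec (p (1,0))))"

definition fle :: "fstate \<Rightarrow> fstate \<Rightarrow> bool" where
  "fle a b \<longleftrightarrow> a = b \<or> b = Zero \<or> (a = LeftDown \<and> b = Down)"

lemma fle_step: "fle (fF_loc a n e) a"
  by (simp add: fF_loc_def fle_def)

lemma fin_fstate: "finite (UNIV :: fstate set)" by (simp add: fstate_UNIV)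

lemma isCA_G: "is_CA (range enc) VN2 fGn"
  unfolding is_CA_def fGn_def using finite_imageI[OF fin_fstate, of enc] by (auto simp: VN2_def)

lemma freezing_G: "freezing (range enc) VN2 fGn"
proof -
  define Rl where "Rl = {(enc a, enc b) | a b. fle a b}"
  have po: "partial_order_on (range enc) Rl"
    unfolding partial_order_on_def preorder_on_def refl_on_def trans_def antisym_def Rl_def
  proof (intro conjI)
    show "{(enc a, enc b) |a b. fle a b} \<subseteq> range enc \<times> range enc" by auto
    show "\<forall>x\<in>range enc. (x, x) \<in> {(enc a, enc b) |a b. fle a b}" by (auto simp: fle_def)
    show "\<forall>x y z. (x, y) \<in> {(enc a, enc b) |a b. fle a b} \<longrightarrow> (y, z) \<in> {(enc a, enc b) |a b. fle a b} \<longrightarrow>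
        (x, z) \<in> {(enc a, enc b) |a b. fle a b}"
      using enc_inj unfolding inj_def by (auto simp: fle_def)
    show "\<forall>x y. (x, y) \<in> {(enc a, enc b) |a b. fle a b} \<longrightarrow> (y, x) \<in> {(enc a, enc b) |a b. fle a b} \<longrightarrow> x = y"
      using enc_inj unfolding inj_def by (auto simp: fle_def)
  qed
  have "\<forall>c\<in>conf (range enc). \<forall>z. (glob VN2 fGn c z, c z) \<in> Rl"
  proof (intro ballI allI)
    fix c :: "cell \<Rightarrow> nat" and z assume "c \<in> conf (range enc)"
    then obtain a where a: "c z = enc a" unfolding conf_def by blast
    have "glob VN2 fGn c z = enc (fF_loc a (dec (c (addp z (0,1)))) (dec (c (addp z (1,0)))))"
      unfolding glob_def fGn_def pat_def using a by (simp add: VN2_def addp_0)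
    then show "(glob VN2 fGn c z, c z) \<in> Rl" unfolding Rl_def using a fle_step by blast
  qed
  then show ?thesis unfolding freezing_def using po by blast
qed

lemma sim_transfer:
  assumes "simulates QU VN2 fU (range enc) VN2 fGn"
  shows "simulates QU VN2 fU (UNIV::fstate set) NF fF"
proof -
  obtain T a1 a2 b1 b2 C phi where h: "T > 0" "b1 > 0" "b2 > 0" "finite C" "(0,0) \<in> C"
    "\<forall>p. (\<forall>n\<in>C. p n \<in> range enc) \<longrightarrow> (\<forall>r\<in>block a1 a2 b1 b2. phi p r \<in> QU)"
    "inj_on (phibar a1 a2 b1 b2 C phi) (conf (range enc))"
    "\<forall>c\<in>conf (range enc). phibar a1 a2 b1 b2 C phi (glob VN2 fGn c) =
                       (glob VN2 fU ^^ T) (phibar a1 a2 b1 b2 C phi c)"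
    using assms unfolding simulates_def by blast
  define phi' where "phi' p = phi (\<lambda>n. if n \<in> C then enc (p n) else undefined)" for p :: "cell \<Rightarrow> fstate"
  have eqPhi: "phibar a1 a2 b1 b2 C phi' c = phibar a1 a2 b1 b2 C phi (enc \<circ> c)" for c
  proof -
    have "(\<lambda>n. if n \<in> C then enc (pat C c z n) else undefined) = pat C (enc \<circ> c) z" for z
      by (auto simp: pat_def)
    then show ?thesis unfolding phibar_def phi'_def Let_def by simp
  qed
  have confenc: "enc \<circ> c \<in> conf (range enc)" for c :: "cell \<Rightarrow> fstate" by (auto simp: conf_def)
  have globenc: "enc \<circ> glob NF fF c = glob VN2 fGn (enc \<circ> c)" for c
    by (rule ext) (simp add: glob_def fGn_def fF_def pat_def VN2_def NF_def)
  have "\<forall>p. (\<forall>n\<in>C. p n \<in> (UNIV::fstate set)) \<longrightarrow> (\<forall>r\<in>block a1 a2 b1 b2. phi' p r \<in> QU)"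
    using h(6) unfolding phi'_def by auto
  moreover have "inj_on (phibar a1 a2 b1 b2 C phi') (conf (UNIV::fstate set))"
  proof (rule inj_onI)
    fix c c' :: "cell \<Rightarrow> fstate"
    assume "phibar a1 a2 b1 b2 C phi' c = phibar a1 a2 b1 b2 C phi' c'"
    then have "enc \<circ> c = enc \<circ> c'" using h(7) confenc unfolding eqPhi inj_on_def by blast
    then show "c = c'" using enc_inj by (metis fun.inj_map inj_eq)
  qed
  moreover have "\<forall>c\<in>conf (UNIV::fstate set). phibar a1 a2 b1 b2 C phi' (glob NF fF c) =
                       (glob VN2 fU ^^ T) (phibar a1 a2 b1 b2 C phi' c)"
    using h(8) confenc unfolding eqPhi globenc by auto
  ultimately show ?thesis unfolding simulates_def using h(1-5) by blast
qed

theorem theorem10: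
  shows "(\<forall>(QU::'q set) fU. is_CA QU VN2 fU \<and> freezing QU VN2 fU \<and> k_change 1 QU VN2 fU
            \<longrightarrow> \<not> simulates QU VN2 fU (UNIV::fstate set) NF fF)
       \<and> \<not> (\<exists>(QU::'q set) fU. is_CA QU VN2 fU \<and> freezing QU VN2 fU \<and> k_change 1 QU VN2 fU \<and>
            (\<forall>(QG::nat set) fG. is_CA QG VN2 fG \<and> freezing QG VN2 fG
               \<longrightarrow> simulates QU VN2 fU QG VN2 fG))"
proof
  show "\<forall>(QU::'q set) fU. is_CA QU VN2 fU \<and> freezing QU VN2 fU \<and> k_change 1 QU VN2 fU
            \<longrightarrow> \<not> simulates QU VN2 fU (UNIV::fstate set) NF fF"
    using part1 by blast
next
  show "\<not> (\<exists>(QU::'q set) fU. is_CA QU VN2 fU \<and> freezing QU VN2 fU \<and> k_change 1 QU VN2 fU \<and>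
            (\<forall>(QG::nat set) fG. is_CA QG VN2 fG \<and> freezing QG VN2 fG
               \<longrightarrow> simulates QU VN2 fU QG VN2 fG))"
  proof
    assume "\<exists>(QU::'q set) fU. is_CA QU VN2 fU \<and> freezing QU VN2 fU \<and> k_change 1 QU VN2 fU \<and>
            (\<forall>(QG::nat set) fG. is_CA QG VN2 fG \<and> freezing QG VN2 fG
               \<longrightarrow> simulates QU VN2 fU QG VN2 fG)"
    then obtain QU :: "'q set" and fU where k: "k_change 1 QU VN2 fU"
      and all: "\<forall>(QG::nat set) fG. is_CA QG VN2 fG \<and> freezing QG VN2 fG \<longrightarrow> simulates QU VN2 fU QG VN2 fG"
      by blast
    have "simulates QU VN2 fU (range enc) VN2 fGn" using all isCA_G freezing_G by blast
    then have "simulates QU VN2 fU (UNIV::fstate set) NF fF" by (rule sim_transfer)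
    then show False using part1[OF k] by blast
  qed
qed


end
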